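(* Consider problem (III) with $n$ datum shapes $D_i\in\mathbb{R}^{d\times m}$ ($d\in\{2,3\}$), visibility matrices $\Gamma_i$, fixed diagonal $\Lambda$ and fixed $\nu\ge0$, where each warp is either the affine transformation (feature map $\beta(p)=[p^{\top},1]^{\top}$, $\mu_i=0$) or a TPS warp (with $\mu_i\ge0$), and the matrices $\mathcal{B}_i(D_i)\Gamma_i\Gamma_i\mathcal{B}_i(D_i)^{\top}+\mu_iZ_i^{\top}Z_i$ are invertible. If each datum shape is replaced by $D_i'=R_iD_i+t_i\mathbf{1}^{\top}$ for arbitrary (possibly distinct) rotations $R_i$ and translations $t_i$, where for a TPS warp its control centers are transformed by the same $(R_i,t_i)$, then the optimal reference shape $S$ of problem (III) remains the same.
   Context: Problem (III): $$\min_{W_i,\,S\in\mathbb{R}^{d\times m}}\ \sum_{i=1}^n\|W_i^{\top}\mathcal{B}_i(D_i)\Gamma_i-S\Gamma_i\|_F^2+\sum_{i=1}^n\mu_i\|Z_iW_i\|_F^2+\nu\|S\mathbf{1}\|_2^2\quad\text{s.t.}\quad SS^{\top}=\Lambda,$$ where $\Gamma_i$ is diagonal with entries in $\{0,1\}$, $\mathcal{B}_i(D)=[\beta_i(p_1),\dots,\beta_i(p_m)]$ for $D=[p_1,\dots,p_m]$ and $\mathbf{1}\in\mathbb{R}^m$ is the all-ones vector. TPS warp: control centers $c_1,\dots,c_l\in\mathbb{R}^d$, parameter $\lambda$, kernel $\phi(r)=r^2\log(r^2)$ ($d=2$) or $-|r|$ ($d=3$); $K_\lambda$ has diagonal $\lambda$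 and off-diagonal entries $\phi(\|c_j-c_k\|)$; $\tilde{C}=[\tilde{c}_1,\dots,\tilde{c}_l]$, $\tilde{c}_j=[c_j^{\top},1]^{\top}$; $K_\lambda$, $\tilde{C}K_\lambda^{-1}\tilde{C}^{\top}$ invertible; $\bar{\mathcal{E}}_\lambda=K_\lambda^{-1}-K_\lambda^{-1}\tilde{C}^{\top}(\tilde{C}K_\lambda^{-1}\tilde{C}^{\top})^{-1}\tilde{C}K_\lambda^{-1}$ (positive semidefinite in the paper's setting); $\mathcal{E}_\lambda=\begin{bmatrix}\bar{\mathcal{E}}_\lambda\\ (\tilde{C}K_\lambda^{-1}\tilde{C}^{\top})^{-1}\tilde{C}K_\lambda^{-1}\end{bmatrix}$; $\beta(p)=\mathcal{E}_\lambda^{\top}\begin{bmatrix}\phi_p\\ \tilde{p}\end{bmatrix}$, $\phi_p=[\phi(\|p-c_j\|)]_j$, $\tilde{p}=[p^{\top},1]^{\top}$; $Z=\sqrt{\bar{\mathcal{E}}_\lambda}$. *)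

theory Defs
  imports "Jordan_Normal_Form.Determinant" "Jordan_Normal_Form.Gauss_Jordan_Elimination"
begin

(* Matrix inverse (Gauss--Jordan); only used on matrices assumed invertible. *)
definition minv :: "real mat \<Rightarrow> real mat" where
  "minv A = the (mat_inverse A)"

definition vnorm :: "real vec \<Rightarrow> real" where
  "vnorm v = sqrt (v \<bullet> v)"

definition fro2 :: "real mat \<Rightarrow> real" where
  "fro2 A = (\<Sum>i<dim_row A. \<Sum>j<dim_col A. (A $$ (i,j))^2)"

definition psd :: "real mat \<Rightarrow> bool" where
  "psd A \<longleftrightarrow> square_mat A \<and> A\<^sup>T = A \<and>
     (\<forall>x \<in> carrier_vec (dim_row A). 0 \<le> x \<bullet> (A *\<^sub>v x))"

definition tps_kernel :: "nat \<Rightarrow> real \<Rightarrow> real" where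
  "tps_kernel d r = (if d = 2 then r^2 * ln (r^2) else - \<bar>r\<bar>)"

(* A warp: affine, or TPS with control centres given as the columns of a
   d x l matrix C and regularisation parameter lambda. *)
datatype warp = Affine | TPS "real mat" real

definition tps_K :: "nat \<Rightarrow> real mat \<Rightarrow> real \<Rightarrow> real mat" where
  "tps_K d C lam = mat (dim_col C) (dim_col C)
     (\<lambda>(j,k). if j = k then lam else tps_kernel d (vnorm (col C j - col C k)))"

definition tps_Ct :: "nat \<Rightarrow> real mat \<Rightarrow> real mat" where
  "tps_Ct d C = mat (d+1) (dim_col C) (\<lambda>(i,j). if i < d then C $$ (i,j) else 1)"

definition tps_Elow :: "nat \<Rightarrow> real mat \<Rightarrow> real \<Rightarrow> real mat" where
  "tps_Elow d C lam =
     (let Ki = minv (tps_K d C lam); Ct = tps_Ct d C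
      in minv (Ct * Ki * Ct\<^sup>T) * Ct * Ki)"

definition tps_Ebar :: "nat \<Rightarrow> real mat \<Rightarrow> real \<Rightarrow> real mat" where
  "tps_Ebar d C lam =
     (let Ki = minv (tps_K d C lam); Ct = tps_Ct d C
      in Ki - Ki * Ct\<^sup>T * minv (Ct * Ki * Ct\<^sup>T) * Ct * Ki)"

definition tps_E :: "nat \<Rightarrow> real mat \<Rightarrow> real \<Rightarrow> real mat" where
  "tps_E d C lam = tps_Ebar d C lam @\<^sub>r tps_Elow d C lam"

fun featdim :: "nat \<Rightarrow> warp \<Rightarrow> nat" where
  "featdim d Affine = d + 1"
| "featdim d (TPS C lam) = dim_col C"

fun feat :: "nat \<Rightarrow> warp \<Rightarrow> real vec \<Rightarrow> real vec" where
  "feat d Affine p = vec (d+1) (\<lambda>i. if i < d then p $ i else 1)"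
| "feat d (TPS C lam) p =
     (tps_E d C lam)\<^sup>T *\<^sub>v
       (vec (dim_col C) (\<lambda>j. tps_kernel d (vnorm (p - col C j)))
        @\<^sub>v vec (d+1) (\<lambda>i. if i < d then p $ i else 1))"

definition featmat :: "nat \<Rightarrow> warp \<Rightarrow> real mat \<Rightarrow> real mat" where
  "featmat d w D = mat (featdim d w) (dim_col D) (\<lambda>(i,j). feat d w (col D j) $ i)"

definition rigid :: "real mat \<Rightarrow> real vec \<Rightarrow> real mat \<Rightarrow> real mat" where
  "rigid R t D = mat (dim_row R) (dim_col D) (\<lambda>(a,j). (R * D) $$ (a,j) + t $ a)"

fun warp_rigid :: "real mat \<Rightarrow> real vec \<Rightarrow> warp \<Rightarrow> warp" where
  "warp_rigid R t Affine = Affine"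
| "warp_rigid R t (TPS C lam) = TPS (rigid R t C) lam"

definition rotation_mat :: "nat \<Rightarrow> real mat \<Rightarrow> bool" where
  "rotation_mat d R \<longleftrightarrow> R \<in> carrier_mat d d \<and> R\<^sup>T * R = 1\<^sub>m d \<and> det R = 1"

definition cost3 ::
  "nat \<Rightarrow> nat \<Rightarrow> (nat \<Rightarrow> warp) \<Rightarrow> (nat \<Rightarrow> real mat) \<Rightarrow> (nat \<Rightarrow> real mat)
   \<Rightarrow> (nat \<Rightarrow> real) \<Rightarrow> (nat \<Rightarrow> real mat) \<Rightarrow> real
   \<Rightarrow> (nat \<Rightarrow> real mat) \<Rightarrow> real mat \<Rightarrow> real" where
  "cost3 d n w D \<Gamma> \<mu> Z \<nu> W S =
     (\<Sum>i<n. fro2 ((W i)\<^sup>T * featmat d (w i) (D i) * \<Gamma> i - S * \<Gamma> i))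
     + (\<Sum>i<n. \<mu> i * fro2 (Z i * W i))
     + \<nu> * (vnorm (S *\<^sub>v vec (dim_col S) (\<lambda>_. 1)))^2"

definition feasible3 ::
  "nat \<Rightarrow> nat \<Rightarrow> nat \<Rightarrow> (nat \<Rightarrow> warp) \<Rightarrow> real mat \<Rightarrow> (nat \<Rightarrow> real mat) \<Rightarrow> real mat \<Rightarrow> bool" where
  "feasible3 d m n w \<Lambda> W S \<longleftrightarrow>
     (\<forall>i<n. W i \<in> carrier_mat (featdim d (w i)) d) \<and>
     S \<in> carrier_mat d m \<and> S * S\<^sup>T = \<Lambda>"

definition opt_shapes3 ::
  "nat \<Rightarrow> nat \<Rightarrow> nat \<Rightarrow> (nat \<Rightarrow> warp) \<Rightarrow> (nat \<Rightarrow> real mat) \<Rightarrow> (nat \<Rightarrow> real mat)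
   \<Rightarrow> (nat \<Rightarrow> real) \<Rightarrow> (nat \<Rightarrow> real mat) \<Rightarrow> real \<Rightarrow> real mat \<Rightarrow> real mat set" where
  "opt_shapes3 d m n w D \<Gamma> \<mu> Z \<nu> \<Lambda> =
     {S. \<exists>W. feasible3 d m n w \<Lambda> W S \<and>
          (\<forall>W' S'. feasible3 d m n w \<Lambda> W' S' \<longrightarrow>
             cost3 d n w D \<Gamma> \<mu> Z \<nu> W S \<le> cost3 d n w D \<Gamma> \<mu> Z \<nu> W' S')}"

end

theory Submission imports Defs begin
lemma minv_props:
  assumes A: "A \<in> carrier_mat n n" and inv: "invertible_mat A"
  shows "minv A \<in> carrier_mat n n \<and> A * minv A = 1\<^sub>m n \<and> minv A * A = 1\<^sub>m n"
proof (cases "mat_inverse A")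
  case None
  from mat_inverse(1)[OF A None, of undefined] have nU: "A \<notin> Units (ring_mat TYPE(real) n undefined)" .
  obtain B where AB: "A * B = 1\<^sub>m (dim_row A)" and BA: "B * A = 1\<^sub>m (dim_row B)"
    using inv unfolding invertible_mat_def inverts_mat_def by blast
  have rA: "dim_row A = n" "dim_col A = n" using A by auto
  have cB: "dim_col B = n" using arg_cong[OF AB, of dim_col] rA by simp
  have rB: "dim_row B = n" using arg_cong[OF BA, of dim_col] rA by simp
  have Bc: "B \<in> carrier_mat n n" using cB rB by (intro carrier_matI)
  have "A \<in> Units (ring_mat TYPE(real) n undefined)"
    unfolding Units_def ring_mat_def
    using A Bc AB BA rA rB by auto
  with nU show ?thesis by contradiction
next
  case (Some B)
  then show ?thesis using mat_inverse(2)[OF A Some] unfolding minv_def by auto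
qed
lemma minv_unique:
  assumes A: "A \<in> carrier_mat n n" and B: "B \<in> carrier_mat n n"
    and BA: "B * A = 1\<^sub>m n" and AB: "A * B = 1\<^sub>m n"
  shows "minv A = B"
proof -
  have rA: "dim_row A = n" "dim_col A = n" and rB: "dim_row B = n" using A B by auto
  have inv: "invertible_mat A" unfolding invertible_mat_def inverts_mat_def square_mat.simps
    by (intro conjI exI[of _ B]) (simp_all only: rA rB AB BA)
  note m = minv_props[OF A inv]
  have mc: "minv A \<in> carrier_mat n n" using m by blast
  have "B = B * 1\<^sub>m n" by (rule right_mult_one_mat[OF B, symmetric])
  also have "\<dots> = B * (A * minv A)" using m by simp
  also have "\<dots> = (B * A) * minv A" by (rule assoc_mult_mat[OF B A mc, symmetric])
  also have "\<dots> = minv A" unfolding BA by (rule left_mult_one_mat[OF mc])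
  finally show ?thesis by simp
qed

lemma unit_inverse:
  fixes A :: "real mat"
  assumes A: "A \<in> carrier_mat n n" and dA: "det A \<noteq> 0"
  obtains B where "B \<in> carrier_mat n n" "A * B = 1\<^sub>m n" "B * A = 1\<^sub>m n"
proof -
  have U: "A \<in> Units (ring_mat TYPE(real) n undefined)" by (rule det_non_zero_imp_unit[OF A dA])
  then have "\<exists>B\<in>carrier_mat n n. B * A = 1\<^sub>m n \<and> A * B = 1\<^sub>m n"
    unfolding Units_def ring_mat_simps by blast
  then show ?thesis using that by blast
qed
definition ptil :: "nat \<Rightarrow> real vec \<Rightarrow> real vec" where
  "ptil d p = vec (d+1) (\<lambda>i. if i < d then p $ i else 1)"

definition affA :: "nat \<Rightarrow> real mat \<Rightarrow> real vec \<Rightarrow> real mat" where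
  "affA d R t = four_block_mat R (mat d 1 (\<lambda>(i,_). t $ i)) (0\<^sub>m 1 d) (1\<^sub>m 1)"

lemma ptil_append: "p \<in> carrier_vec d \<Longrightarrow> ptil d p = p @\<^sub>v vec 1 (\<lambda>_. 1)"
  unfolding ptil_def by (intro eq_vecI) auto

lemma ptil_carrier[simp]: "ptil d p \<in> carrier_vec (d+1)"
  unfolding ptil_def by auto

lemma affA_carrier: "R \<in> carrier_mat d d \<Longrightarrow> affA d R t \<in> carrier_mat (d+1) (d+1)"
  unfolding affA_def by (rule four_block_carrier_mat) auto

lemma affA_det: "R \<in> carrier_mat d d \<Longrightarrow> det (affA d R t) = det R"
  unfolding affA_def by (subst det_four_block_mat_lower_left_zero[of _ d _ 1]) auto

lemma affA_mult:
  assumes R: "R \<in> carrier_mat d d" and t: "t \<in> carrier_vec d" and p: "p \<in> carrier_vec d"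
  shows "affA d R t *\<^sub>v ptil d p = ptil d (R *\<^sub>v p + t)"
proof -
  have T: "mat d 1 (\<lambda>(i,_). t $ i) *\<^sub>v vec 1 (\<lambda>_. 1) = t"
    using t by (intro eq_vecI) (auto simp: scalar_prod_def row_def)
  have "affA d R t *\<^sub>v ptil d p = (R *\<^sub>v p + mat d 1 (\<lambda>(i,_). t $ i) *\<^sub>v vec 1 (\<lambda>_. 1)) @\<^sub>v
        (0\<^sub>m 1 d *\<^sub>v p + 1\<^sub>m 1 *\<^sub>v vec 1 (\<lambda>_. 1))"
    unfolding affA_def ptil_append[OF p]
    by (rule four_block_mat_mult_vec[OF R _ _ _ p]) auto
  also have "\<dots> = (R *\<^sub>v p + t) @\<^sub>v vec 1 (\<lambda>_. 1)"
    unfolding T using p by auto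
  also have "\<dots> = ptil d (R *\<^sub>v p + t)"
    by (rule ptil_append[symmetric]) (use R t p in auto)
  finally show ?thesis .
qed

lemma rigid_carrier: "R \<in> carrier_mat d d \<Longrightarrow> D \<in> carrier_mat d m \<Longrightarrow> rigid R t D \<in> carrier_mat d m"
  unfolding rigid_def by auto

lemma col_rigid:
  assumes R: "R \<in> carrier_mat d d" and D: "D \<in> carrier_mat d m" and t: "t \<in> carrier_vec d" and j: "j < m"
  shows "col (rigid R t D) j = R *\<^sub>v col D j + t"
  using R D t j unfolding rigid_def by (intro eq_vecI) auto

lemma vnorm_rot:
  assumes R: "R \<in> carrier_mat d d" and RR: "R\<^sup>T * R = 1\<^sub>m d" and x: "x \<in> carrier_vec d"
  shows "vnorm (R *\<^sub>v x) = vnorm x"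
proof -
  have "(R *\<^sub>v x) \<bullet> (R *\<^sub>v x) = (R\<^sup>T *\<^sub>v (R *\<^sub>v x)) \<bullet> x"
    by (rule transpose_vec_mult_scalar[OF R x, symmetric]) (use R x in auto)
  also have "R\<^sup>T *\<^sub>v (R *\<^sub>v x) = (R\<^sup>T * R) *\<^sub>v x"
    using R x by (subst assoc_mult_mat_vec[of _ d d]) auto
  also have "\<dots> = x" using RR x by auto
  finally show ?thesis unfolding vnorm_def by simp
qed

lemma col_Ct:
  assumes C: "C \<in> carrier_mat d l" and j: "j < l"
  shows "col (tps_Ct d C) j = ptil d (col C j)"
  using C j unfolding tps_Ct_def ptil_def by (intro eq_vecI) auto

lemma Ct_carrier: "C \<in> carrier_mat d l \<Longrightarrow> tps_Ct d C \<in> carrier_mat (d+1) l"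
  unfolding tps_Ct_def by auto

lemma Ct_rigid:
  assumes R: "R \<in> carrier_mat d d" and C: "C \<in> carrier_mat d l" and t: "t \<in> carrier_vec d"
  shows "tps_Ct d (rigid R t C) = affA d R t * tps_Ct d C"
proof (rule mat_col_eqI)
  have C': "rigid R t C \<in> carrier_mat d l" using rigid_carrier[OF R C] .
  fix j assume "j < dim_col (affA d R t * tps_Ct d C)"
  then have j: "j < l" using Ct_carrier[OF C] by simp
  have "col (affA d R t * tps_Ct d C) j = affA d R t *\<^sub>v col (tps_Ct d C) j"
    by (rule col_mult2[OF affA_carrier[OF R] Ct_carrier[OF C] j])
  also have "\<dots> = ptil d (R *\<^sub>v col C j + t)"
    unfolding col_Ct[OF C j] by (rule affA_mult[OF R t]) (use C j in auto)
  also have "\<dots> = col (tps_Ct d (rigid R t C)) j"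
    unfolding col_Ct[OF C' j] col_rigid[OF R C t j] ..
  finally show "col (tps_Ct d (rigid R t C)) j = col (affA d R t * tps_Ct d C) j" by simp
qed (use carrier_matD[OF affA_carrier[OF R, of t]] carrier_matD[OF Ct_carrier[OF C]] carrier_matD[OF Ct_carrier[OF rigid_carrier[OF R C, of t]]] in auto)

lemma K_rigid:
  assumes R: "R \<in> carrier_mat d d" and RR: "R\<^sup>T * R = 1\<^sub>m d" and C: "C \<in> carrier_mat d l" and t: "t \<in> carrier_vec d"
  shows "tps_K d (rigid R t C) lam = tps_K d C lam"
proof -
  have C': "rigid R t C \<in> carrier_mat d l" using rigid_carrier[OF R C] .
  have "vnorm (col (rigid R t C) j - col (rigid R t C) k) = vnorm (col C j - col C k)"
    if j: "j < l" and k: "k < l" for j k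
  proof -
    have "col (rigid R t C) j - col (rigid R t C) k = R *\<^sub>v (col C j - col C k)"
      unfolding col_rigid[OF R C t j] col_rigid[OF R C t k]
      using R C t j k by (subst mult_minus_distrib_mat_vec[OF R]) (auto intro!: eq_vecI)
    then show ?thesis using vnorm_rot[OF R RR] C j k by simp
  qed
  then show ?thesis unfolding tps_K_def using C C' by (intro eq_matI) auto
qed

lemma cancel_l:
  fixes A B X :: "real mat"
  assumes "B * A = 1\<^sub>m n" "A \<in> carrier_mat n n" "B \<in> carrier_mat n n" "X \<in> carrier_mat n k"
  shows "B * (A * X) = X"
proof -
  have "B * (A * X) = (B * A) * X" by (rule assoc_mult_mat[symmetric, OF assms(3,2,4)])
  also have "\<dots> = X" unfolding assms(1) using assms(4) by (rule left_mult_one_mat)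
  finally show ?thesis .
qed

lemma cancel_d:
  fixes A B X :: "real mat"
  assumes "B * A = 1\<^sub>m n" "A \<in> carrier_mat n n" "B \<in> carrier_mat n n" "dim_row X = n"
  shows "B * (A * X) = X"
proof -
  have "X \<in> carrier_mat n (dim_col X)" using assms(4) by (intro carrier_matI) simp_all
  then show ?thesis by (rule cancel_l[OF assms(1-3)])
qed

lemma asc':
  fixes A B C :: "real mat"
  assumes h1: "dim_col A = dim_row B" and h2: "dim_col B = dim_row C"
  shows "A * B * C = A * (B * C)"
proof -
  have a: "A \<in> carrier_mat (dim_row A) (dim_col A)" by (rule carrier_matI) (rule refl)+
  have b: "B \<in> carrier_mat (dim_col A) (dim_col B)" using h1 by (intro carrier_matI) simp_all
  have c: "C \<in> carrier_mat (dim_col B) (dim_col C)" using h2 by (intro carrier_matI) simp_all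
  show ?thesis by (rule assoc_mult_mat[OF a b c])
qed

lemma appr_T:
  assumes X: "X \<in> carrier_mat a c" and Y: "Y \<in> carrier_mat b c"
    and u: "u \<in> carrier_vec a" and v: "v \<in> carrier_vec b"
  shows "(X @\<^sub>r Y)\<^sup>T *\<^sub>v (u @\<^sub>v v) = X\<^sup>T *\<^sub>v u + Y\<^sup>T *\<^sub>v v"
proof (rule eq_vecI)
  have XY: "X @\<^sub>r Y \<in> carrier_mat (a+b) c" using X Y by auto
  fix i assume "i < dim_vec (X\<^sup>T *\<^sub>v u + Y\<^sup>T *\<^sub>v v)"
  then have i: "i < c" using X Y by simp
  have col: "col (X @\<^sub>r Y) i = col X i @\<^sub>v col Y i"
    unfolding append_rows_def using X Y i
    by (subst col_four_block_mat(1)[of _ a c _ 0 _ b]) auto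
  have "((X @\<^sub>r Y)\<^sup>T *\<^sub>v (u @\<^sub>v v)) $ i = col (X @\<^sub>r Y) i \<bullet> (u @\<^sub>v v)"
    using XY i by simp
  also have "\<dots> = col X i \<bullet> u + col Y i \<bullet> v"
    unfolding col by (rule scalar_prod_append) (use X Y u v i in auto)
  also have "\<dots> = (X\<^sup>T *\<^sub>v u + Y\<^sup>T *\<^sub>v v) $ i" using X Y i by simp
  finally show "((X @\<^sub>r Y)\<^sup>T *\<^sub>v (u @\<^sub>v v)) $ i = (X\<^sup>T *\<^sub>v u + Y\<^sup>T *\<^sub>v v) $ i" .
qed (use carrier_matD[OF X] carrier_matD[OF Y] carrier_matD[OF carrier_append_rows[OF X Y]] in auto)


lemma tps_inv:
  assumes R: "R \<in> carrier_mat d d" and RR: "R\<^sup>T * R = 1\<^sub>m d" and dR: "det R = 1"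
    and C: "C \<in> carrier_mat d l" and t: "t \<in> carrier_vec d"
    and K: "invertible_mat (tps_K d C lam)"
    and M: "invertible_mat (tps_Ct d C * minv (tps_K d C lam) * (tps_Ct d C)\<^sup>T)"
  shows "tps_Ebar d (rigid R t C) lam = tps_Ebar d C lam"
    "(affA d R t)\<^sup>T * tps_Elow d (rigid R t C) lam = tps_Elow d C lam"
    "tps_Ebar d C lam \<in> carrier_mat l l"
    "tps_Elow d (rigid R t C) lam \<in> carrier_mat (d+1) l"
proof -
  define e where "e = d+1"
  define Ki where "Ki = minv (tps_K d C lam)"
  define Ct where "Ct = tps_Ct d C"
  define A where "A = affA d R t"
  define MM where "MM = Ct * Ki * Ct\<^sup>T"
  define Mi where "Mi = minv MM"
  have Kc: "tps_K d C lam \<in> carrier_mat l l" unfolding tps_K_def using C by auto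
  note Kp = minv_props[OF Kc K, folded Ki_def]
  have Kic: "Ki \<in> carrier_mat l l" using Kp by auto
  have Ctc: "Ct \<in> carrier_mat e l" unfolding Ct_def using Ct_carrier[OF C] e_def by simp
  have Ac: "A \<in> carrier_mat e e" unfolding A_def using affA_carrier[OF R] e_def by simp
  have Mc: "MM \<in> carrier_mat e e" unfolding MM_def using Ctc Kic by auto
  note Mp = minv_props[OF Mc M[folded Ki_def Ct_def, folded MM_def], folded Mi_def]
  have Mic: "Mi \<in> carrier_mat e e" using Mp by auto
  have dA: "det A \<noteq> 0" unfolding A_def affA_det[OF R] dR by simp
  obtain Ai where Aic: "Ai \<in> carrier_mat e e" and AAi: "A * Ai = 1\<^sub>m e"
    and AiA: "Ai * A = 1\<^sub>m e" by (rule unit_inverse[OF Ac dA])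
  have AiTAT: "Ai\<^sup>T * A\<^sup>T = 1\<^sub>m e" unfolding transpose_mult[OF Ac Aic, symmetric] AAi by simp
  have ATAiT: "A\<^sup>T * Ai\<^sup>T = 1\<^sub>m e" unfolding transpose_mult[OF Aic Ac, symmetric] AiA by simp
  define N where "N = Ai\<^sup>T * Mi * Ai"
  have Nc: "N \<in> carrier_mat e e" unfolding N_def using Aic Mic by auto
  have dims: "dim_row A = e" "dim_col A = e" "dim_row Ai = e" "dim_col Ai = e"
    "dim_row Ct = e" "dim_col Ct = l" "dim_row Ki = l" "dim_col Ki = l"
    "dim_row Mi = e" "dim_col Mi = e" "dim_row MM = e" "dim_col MM = e"
    "dim_row N = e" "dim_col N = e"
    using Ac Aic Ctc Kic Mic Mc Nc by auto
  have c1: "Ai * (A * X) = X" if "dim_row X = e" for X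
    by (rule cancel_d[OF AiA Ac Aic that])
  have c2: "A * (Ai * X) = X" if "dim_row X = e" for X
    by (rule cancel_d[OF AAi Aic Ac that])
  have c3: "Ai\<^sup>T * (A\<^sup>T * X) = X" if "dim_row X = e" for X
    by (rule cancel_d[OF AiTAT]) (use Ac Aic that in auto)
  have c4: "A\<^sup>T * (Ai\<^sup>T * X) = X" if "dim_row X = e" for X
    by (rule cancel_d[OF ATAiT]) (use Ac Aic that in auto)
  have c5: "Mi * (MM * X) = X" if "dim_row X = e" for X
    by (rule cancel_d) (use Mp Mc Mic that in auto)
  have c6: "MM * (Mi * X) = X" if "dim_row X = e" for X
    by (rule cancel_d) (use Mp Mc Mic that in auto)
  have Ct': "tps_Ct d (rigid R t C) = A * Ct" unfolding A_def Ct_def by (rule Ct_rigid[OF R C t])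
  have K': "tps_K d (rigid R t C) lam = tps_K d C lam" by (rule K_rigid[OF R RR C t])
  have ACtT: "(A * Ct)\<^sup>T = Ct\<^sup>T * A\<^sup>T" by (rule transpose_mult[OF Ac Ctc])
  have M': "(A * Ct) * Ki * (A * Ct)\<^sup>T = A * (MM * A\<^sup>T)"
    unfolding ACtT MM_def by (simp add: asc' dims)
  have M'c: "(A * Ct) * Ki * (A * Ct)\<^sup>T \<in> carrier_mat e e" using Ac Ctc Kic by auto
  have NM: "N * ((A * Ct) * Ki * (A * Ct)\<^sup>T) = 1\<^sub>m e"
  proof -
    have "N * ((A * Ct) * Ki * (A * Ct)\<^sup>T) = Ai\<^sup>T * (Mi * (Ai * (A * (MM * A\<^sup>T))))"
      unfolding M' N_def by (simp add: asc' dims)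
    also have "\<dots> = 1\<^sub>m e" by (simp add: c1 c5 AiTAT dims)
    finally show ?thesis .
  qed
  have MN: "((A * Ct) * Ki * (A * Ct)\<^sup>T) * N = 1\<^sub>m e"
  proof -
    have "((A * Ct) * Ki * (A * Ct)\<^sup>T) * N = A * (MM * (A\<^sup>T * (Ai\<^sup>T * (Mi * Ai))))"
      unfolding M' N_def by (simp add: asc' dims)
    also have "\<dots> = 1\<^sub>m e" by (simp add: c4 c6 AAi dims)
    finally show ?thesis .
  qed
  have minvM': "minv ((A * Ct) * Ki * (A * Ct)\<^sup>T) = N"
    by (rule minv_unique[OF M'c Nc NM MN])
  have ANA: "A\<^sup>T * (N * (A * X)) = Mi * X" if "dim_row X = e" for X
  proof -
    have "A\<^sup>T * (N * (A * X)) = A\<^sup>T * (Ai\<^sup>T * (Mi * (Ai * (A * X))))"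
      unfolding N_def using that by (simp add: asc' dims)
    also have "\<dots> = Mi * X" using that by (simp add: c1 c4 dims)
    finally show ?thesis .
  qed
  have Ebar: "tps_Ebar d C lam = Ki - Ki * Ct\<^sup>T * Mi * Ct * Ki"
    unfolding tps_Ebar_def Let_def Ki_def Ct_def Mi_def MM_def ..
  have Elow: "tps_Elow d C lam = Mi * Ct * Ki"
    unfolding tps_Elow_def Let_def Ki_def Ct_def Mi_def MM_def ..
  have Ebar': "tps_Ebar d (rigid R t C) lam = Ki - Ki * (A * Ct)\<^sup>T * N * (A * Ct) * Ki"
    unfolding tps_Ebar_def Let_def K' Ct' Ki_def[symmetric] minvM' ..
  have Elow': "tps_Elow d (rigid R t C) lam = N * (A * Ct) * Ki"
    unfolding tps_Elow_def Let_def K' Ct' Ki_def[symmetric] minvM' ..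
  have "Ki * (A * Ct)\<^sup>T * N * (A * Ct) * Ki = Ki * (Ct\<^sup>T * (A\<^sup>T * (N * (A * (Ct * Ki)))))"
    unfolding ACtT by (simp add: asc' dims)
  also have "\<dots> = Ki * (Ct\<^sup>T * (Mi * (Ct * Ki)))" by (simp add: ANA dims)
  also have "\<dots> = Ki * Ct\<^sup>T * Mi * Ct * Ki" by (simp add: asc' dims)
  finally show "tps_Ebar d (rigid R t C) lam = tps_Ebar d C lam" unfolding Ebar Ebar' by simp
  have "A\<^sup>T * (N * (A * Ct) * Ki) = A\<^sup>T * (N * (A * (Ct * Ki)))" by (simp add: asc' dims)
  also have "\<dots> = Mi * (Ct * Ki)" by (simp add: ANA dims)
  also have "\<dots> = Mi * Ct * Ki" by (simp add: asc' dims)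
  finally show "(affA d R t)\<^sup>T * tps_Elow d (rigid R t C) lam = tps_Elow d C lam"
    unfolding Elow Elow' A_def[symmetric] .
  show "tps_Ebar d C lam \<in> carrier_mat l l" unfolding Ebar using Kic Ctc Mic
    by (intro minus_carrier_mat) auto
  show "tps_Elow d (rigid R t C) lam \<in> carrier_mat (d+1) l" unfolding Elow' using Nc Ac Ctc Kic e_def by auto
qed


lemma ptil_carrier'[simp]: "ptil d p \<in> carrier_vec (Suc d)"
  unfolding ptil_def by auto

lemma feat_affine_ptil: "feat d Affine p = ptil d p"
  unfolding ptil_def by simp

lemma rot_diff:
  fixes R :: "real mat" and t p c :: "real vec"
  assumes R: "R \<in> carrier_mat d d" and t: "t \<in> carrier_vec d" and p: "p \<in> carrier_vec d" and c: "c \<in> carrier_vec d"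
  shows "(R *\<^sub>v p + t) - (R *\<^sub>v c + t) = R *\<^sub>v (p - c)"
proof -
  have "R *\<^sub>v (p - c) = R *\<^sub>v p - R *\<^sub>v c" by (rule mult_minus_distrib_mat_vec[OF R p c])
  then show ?thesis using R t p c by (auto intro!: eq_vecI)
qed

lemma feat_tps_rigid:
  assumes R: "R \<in> carrier_mat d d" and RR: "R\<^sup>T * R = 1\<^sub>m d" and dR: "det R = 1"
    and C: "C \<in> carrier_mat d l" and t: "t \<in> carrier_vec d"
    and K: "invertible_mat (tps_K d C lam)"
    and M: "invertible_mat (tps_Ct d C * minv (tps_K d C lam) * (tps_Ct d C)\<^sup>T)"
    and p: "p \<in> carrier_vec d"
  shows "feat d (TPS (rigid R t C) lam) (R *\<^sub>v p + t) = feat d (TPS C lam) p"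
proof -
  note T = tps_inv[OF R RR dR C t K M]
  define C' where "C' = rigid R t C"
  have C': "C' \<in> carrier_mat d l" unfolding C'_def by (rule rigid_carrier[OF R C])
  define A where "A = affA d R t"
  have Ac: "A \<in> carrier_mat (d+1) (d+1)" unfolding A_def by (rule affA_carrier[OF R])
  define Eb where "Eb = tps_Ebar d C lam"
  define El where "El = tps_Elow d C lam"
  define El' where "El' = tps_Elow d C' lam"
  have Ebc: "Eb \<in> carrier_mat l l" unfolding Eb_def by (rule T(3))
  have El'c: "El' \<in> carrier_mat (d+1) l" unfolding El'_def C'_def by (rule T(4))
  have AEl: "A\<^sup>T * El' = El" unfolding A_def El'_def El_def C'_def by (rule T(2))
  have Elc: "El \<in> carrier_mat (d+1) l" unfolding AEl[symmetric] using Ac El'c by auto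
  define phi where "phi = vec (dim_col C) (\<lambda>j. tps_kernel d (vnorm (p - col C j)))"
  have phic: "phi \<in> carrier_vec l" unfolding phi_def using C by auto
  have phi': "vec (dim_col C') (\<lambda>j. tps_kernel d (vnorm (R *\<^sub>v p + t - col C' j))) = phi"
  proof (rule eq_vecI)
    fix j assume "j < dim_vec phi"
    then have j: "j < l" unfolding phi_def using C by simp
    have cj: "col C j \<in> carrier_vec d" using C j by auto
    have "R *\<^sub>v p + t - col C' j = R *\<^sub>v (p - col C j)"
      unfolding C'_def col_rigid[OF R C t j] by (rule rot_diff[OF R t p cj])
    then have "vnorm (R *\<^sub>v p + t - col C' j) = vnorm (p - col C j)"
      using vnorm_rot[OF R RR] p cj by simp
    then show "vec (dim_col C') (\<lambda>j. tps_kernel d (vnorm (R *\<^sub>v p + t - col C' j))) $ j = phi $ j"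
      unfolding phi_def using C C' j by simp
  qed (use C C' in \<open>simp add: phi_def\<close>)
  have pt: "vec (d+1) (\<lambda>i. if i < d then (R *\<^sub>v p + t) $ i else 1) = A *\<^sub>v ptil d p"
    unfolding A_def affA_mult[OF R t p] by (simp add: ptil_def)
  have pt0: "vec (d+1) (\<lambda>i. if i < d then p $ i else 1) = ptil d p"
    unfolding ptil_def ..
  have Ebar': "tps_Ebar d C' lam = Eb" unfolding Eb_def C'_def by (rule T(1))
  have "feat d (TPS C' lam) (R *\<^sub>v p + t) = (Eb @\<^sub>r El')\<^sup>T *\<^sub>v (phi @\<^sub>v (A *\<^sub>v ptil d p))"
    unfolding feat.simps tps_E_def Ebar' phi' pt El'_def ..
  also have "\<dots> = Eb\<^sup>T *\<^sub>v phi + El'\<^sup>T *\<^sub>v (A *\<^sub>v ptil d p)"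
    by (rule appr_T[OF Ebc El'c phic]) (use Ac in auto)
  also have "El'\<^sup>T *\<^sub>v (A *\<^sub>v ptil d p) = (El'\<^sup>T * A) *\<^sub>v ptil d p"
    using El'c Ac by (subst assoc_mult_mat_vec[of _ l "d+1" _ "d+1"]) auto
  also have "El'\<^sup>T * A = (A\<^sup>T * El')\<^sup>T"
    using El'c Ac by (subst transpose_mult[of _ "d+1" "d+1"]) auto
  also have "\<dots> = El\<^sup>T" unfolding AEl ..
  also have "Eb\<^sup>T *\<^sub>v phi + El\<^sup>T *\<^sub>v ptil d p = (Eb @\<^sub>r El)\<^sup>T *\<^sub>v (phi @\<^sub>v ptil d p)"
    by (rule appr_T[OF Ebc Elc phic, symmetric]) auto
  also have "\<dots> = feat d (TPS C lam) p"
    unfolding feat.simps tps_E_def Eb_def El_def phi_def pt0 ..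
  finally show ?thesis unfolding C'_def .
qed

lemma col_featmat_affine:
  assumes D: "D \<in> carrier_mat d m" and j: "j < m"
  shows "col (featmat d Affine D) j = ptil d (col D j)"
  using D j unfolding featmat_def feat_affine_ptil by (intro eq_vecI) (auto simp: ptil_def)

lemma featmat_affine_rigid:
  assumes R: "R \<in> carrier_mat d d" and D: "D \<in> carrier_mat d m" and t: "t \<in> carrier_vec d"
  shows "featmat d Affine (rigid R t D) = affA d R t * featmat d Affine D"
proof (rule mat_col_eqI)
  have D': "rigid R t D \<in> carrier_mat d m" by (rule rigid_carrier[OF R D])
  have F: "featmat d Affine D \<in> carrier_mat (d+1) m" unfolding featmat_def using D by auto
  fix j assume "j < dim_col (affA d R t * featmat d Affine D)"
  then have j: "j < m" using F by simp
  have "col (affA d R t * featmat d Affine D) j = affA d R t *\<^sub>v ptil d (col D j)"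
    unfolding col_mult2[OF affA_carrier[OF R] F j] col_featmat_affine[OF D j] ..
  also have "\<dots> = ptil d (R *\<^sub>v col D j + t)" by (rule affA_mult[OF R t]) (use D j in auto)
  also have "\<dots> = col (featmat d Affine (rigid R t D)) j"
    unfolding col_featmat_affine[OF D' j] col_rigid[OF R D t j] ..
  finally show "col (featmat d Affine (rigid R t D)) j = col (affA d R t * featmat d Affine D) j" by simp
next
  have D': "rigid R t D \<in> carrier_mat d m" by (rule rigid_carrier[OF R D])
  have F: "featmat d Affine D \<in> carrier_mat (d+1) m" unfolding featmat_def using D by auto
  show "dim_row (featmat d Affine (rigid R t D)) = dim_row (affA d R t * featmat d Affine D)"
    using carrier_matD[OF affA_carrier[OF R, of t]] unfolding featmat_def by simp
  show "dim_col (featmat d Affine (rigid R t D)) = dim_col (affA d R t * featmat d Affine D)"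
    using carrier_matD[OF D'] carrier_matD[OF F] unfolding featmat_def by simp
qed

lemma featmat_tps_rigid:
  assumes R: "R \<in> carrier_mat d d" and RR: "R\<^sup>T * R = 1\<^sub>m d" and dR: "det R = 1"
    and C: "C \<in> carrier_mat d l" and t: "t \<in> carrier_vec d"
    and K: "invertible_mat (tps_K d C lam)"
    and M: "invertible_mat (tps_Ct d C * minv (tps_K d C lam) * (tps_Ct d C)\<^sup>T)"
    and D: "D \<in> carrier_mat d m"
  shows "featmat d (TPS (rigid R t C) lam) (rigid R t D) = featmat d (TPS C lam) D"
proof -
  have D': "rigid R t D \<in> carrier_mat d m" by (rule rigid_carrier[OF R D])
  have C': "rigid R t C \<in> carrier_mat d l" by (rule rigid_carrier[OF R C])
  have "feat d (TPS (rigid R t C) lam) (col (rigid R t D) j) = feat d (TPS C lam) (col D j)"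
    if j: "j < m" for j
    unfolding col_rigid[OF R D t j] by (rule feat_tps_rigid[OF R RR dR C t K M]) (use D j in auto)
  then show ?thesis unfolding featmat_def using C C' D D' by (intro eq_matI) auto
qed

lemma fro2_cols: "fro2 X = (\<Sum>j<dim_col X. col X j \<bullet> col X j)"
proof -
  have "fro2 X = (\<Sum>j<dim_col X. \<Sum>i<dim_row X. (X $$ (i,j))^2)"
    unfolding fro2_def by (rule sum.swap)
  also have "\<dots> = (\<Sum>j<dim_col X. col X j \<bullet> col X j)"
    by (rule sum.cong[OF refl]) (simp add: scalar_prod_def atLeast0LessThan power2_eq_square)
  finally show ?thesis .
qed

lemma fro2_Z:
  assumes Z: "Z \<in> carrier_mat l l" and Z': "Z' \<in> carrier_mat l l"
    and ZT: "Z\<^sup>T = Z" and Z'T: "Z'\<^sup>T = Z'" and ZZ: "Z' * Z' = Z * Z"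
    and W: "W \<in> carrier_mat l k"
  shows "fro2 (Z' * W) = fro2 (Z * W)"
proof -
  have q: "(Y *\<^sub>v w) \<bullet> (Y *\<^sub>v w) = ((Y * Y) *\<^sub>v w) \<bullet> w"
    if Y: "Y \<in> carrier_mat l l" and YT: "Y\<^sup>T = Y" and w: "w \<in> carrier_vec l" for Y :: "real mat" and w
  proof -
    have "(Y *\<^sub>v w) \<bullet> (Y *\<^sub>v w) = (Y\<^sup>T *\<^sub>v (Y *\<^sub>v w)) \<bullet> w"
      by (rule transpose_vec_mult_scalar[OF Y w, symmetric]) (use Y w in auto)
    also have "Y\<^sup>T *\<^sub>v (Y *\<^sub>v w) = (Y * Y) *\<^sub>v w"
      unfolding YT using Y w by (subst assoc_mult_mat_vec[of _ l l _ l]) auto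
    finally show ?thesis .
  qed
  have "fro2 (Z' * W) = (\<Sum>j<k. col (Z' * W) j \<bullet> col (Z' * W) j)"
    unfolding fro2_cols using Z' W by simp
  also have "\<dots> = (\<Sum>j<k. col (Z * W) j \<bullet> col (Z * W) j)"
  proof (rule sum.cong[OF refl])
    fix j assume "j \<in> {..<k}"
    then have j: "j < k" by simp
    have w: "col W j \<in> carrier_vec l" using W j by auto
    show "col (Z' * W) j \<bullet> col (Z' * W) j = col (Z * W) j \<bullet> col (Z * W) j"
      unfolding col_mult2[OF Z' W j] col_mult2[OF Z W j] q[OF Z' Z'T w] q[OF Z ZT w] ZZ ..
  qed
  also have "\<dots> = fro2 (Z * W)"
    unfolding fro2_cols using Z W by simp
  finally show ?thesis .
qed

lemma cost3_cong:
  assumes "\<forall>i<n. W i = W' i"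
  shows "cost3 d n w D \<Gamma> \<mu> Z \<nu> W S = cost3 d n w D \<Gamma> \<mu> Z \<nu> W' S"
  unfolding cost3_def using assms by simp

lemma opt_transfer:
  fixes T :: "nat \<Rightarrow> real mat \<Rightarrow> real mat"
  assumes fd: "\<forall>i<n. featdim d (w' i) = featdim d (w i)"
    and T1: "\<And>i W. i < n \<Longrightarrow> W \<in> carrier_mat (featdim d (w i)) d \<Longrightarrow> T i W \<in> carrier_mat (featdim d (w i)) d"
    and T2: "\<And>i W2. i < n \<Longrightarrow> W2 \<in> carrier_mat (featdim d (w i)) d \<Longrightarrow> \<exists>W\<in>carrier_mat (featdim d (w i)) d. T i W = W2"
    and cost: "\<And>W S. \<forall>i<n. W i \<in> carrier_mat (featdim d (w i)) d \<Longrightarrow>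
        cost3 d n w' D' \<Gamma> \<mu> Z' \<nu> W S = cost3 d n w D \<Gamma> \<mu> Z \<nu> (\<lambda>i. T i (W i)) S"
  shows "opt_shapes3 d m n w' D' \<Gamma> \<mu> Z' \<nu> \<Lambda> = opt_shapes3 d m n w D \<Gamma> \<mu> Z \<nu> \<Lambda>"
proof -
  have feq: "feasible3 d m n w' \<Lambda> W S = feasible3 d m n w \<Lambda> W S" for W S
    unfolding feasible3_def using fd by auto
  have fT: "feasible3 d m n w \<Lambda> (\<lambda>i. T i (W i)) S" if "feasible3 d m n w \<Lambda> W S" for W S
    using that T1 unfolding feasible3_def by auto
  have pre: "\<exists>W. feasible3 d m n w \<Lambda> W S \<and> (\<forall>i<n. T i (W i) = W2 i)"
    if "feasible3 d m n w \<Lambda> W2 S" for W2 S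
  proof -
    define W where "W i = (SOME W. W \<in> carrier_mat (featdim d (w i)) d \<and> T i W = W2 i)" for i
    have "W i \<in> carrier_mat (featdim d (w i)) d \<and> T i (W i) = W2 i" if i: "i < n" for i
    proof -
      have "\<exists>W. W \<in> carrier_mat (featdim d (w i)) d \<and> T i W = W2 i"
        using T2[OF i] \<open>feasible3 d m n w \<Lambda> W2 S\<close> i unfolding feasible3_def by blast
      then show ?thesis unfolding W_def by (rule someI_ex)
    qed
    then show ?thesis using that unfolding feasible3_def by auto
  qed
  show ?thesis
  proof (intro Set.set_eqI iffI)
    fix S assume "S \<in> opt_shapes3 d m n w' D' \<Gamma> \<mu> Z' \<nu> \<Lambda>"
    then obtain W where fW: "feasible3 d m n w' \<Lambda> W S"
      and minW: "\<And>W' S'. feasible3 d m n w' \<Lambda> W' S' \<Longrightarrow>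
         cost3 d n w' D' \<Gamma> \<mu> Z' \<nu> W S \<le> cost3 d n w' D' \<Gamma> \<mu> Z' \<nu> W' S'"
      unfolding opt_shapes3_def by blast
    have fW0: "feasible3 d m n w \<Lambda> W S" using fW feq by simp
    show "S \<in> opt_shapes3 d m n w D \<Gamma> \<mu> Z \<nu> \<Lambda>"
      unfolding opt_shapes3_def mem_Collect_eq
    proof (rule exI[of _ "\<lambda>i. T i (W i)"], intro conjI allI impI)
      show "feasible3 d m n w \<Lambda> (\<lambda>i. T i (W i)) S" by (rule fT[OF fW0])
      fix W2 S2 assume f2: "feasible3 d m n w \<Lambda> W2 S2"
      obtain W3 where f3: "feasible3 d m n w \<Lambda> W3 S2" and e3: "\<forall>i<n. T i (W3 i) = W2 i"
        using pre[OF f2] by blast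
      have "cost3 d n w D \<Gamma> \<mu> Z \<nu> (\<lambda>i. T i (W i)) S = cost3 d n w' D' \<Gamma> \<mu> Z' \<nu> W S"
        using cost fW0 unfolding feasible3_def by simp
      also have "\<dots> \<le> cost3 d n w' D' \<Gamma> \<mu> Z' \<nu> W3 S2" using minW f3 feq by simp
      also have "\<dots> = cost3 d n w D \<Gamma> \<mu> Z \<nu> (\<lambda>i. T i (W3 i)) S2"
        using cost f3 unfolding feasible3_def by simp
      also have "\<dots> = cost3 d n w D \<Gamma> \<mu> Z \<nu> W2 S2" by (rule cost3_cong[OF e3])
      finally show "cost3 d n w D \<Gamma> \<mu> Z \<nu> (\<lambda>i. T i (W i)) S \<le> cost3 d n w D \<Gamma> \<mu> Z \<nu> W2 S2" .
    qed
  next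
    fix S assume "S \<in> opt_shapes3 d m n w D \<Gamma> \<mu> Z \<nu> \<Lambda>"
    then obtain W where fW: "feasible3 d m n w \<Lambda> W S"
      and minW: "\<And>W' S'. feasible3 d m n w \<Lambda> W' S' \<Longrightarrow>
         cost3 d n w D \<Gamma> \<mu> Z \<nu> W S \<le> cost3 d n w D \<Gamma> \<mu> Z \<nu> W' S'"
      unfolding opt_shapes3_def by blast
    obtain W0 where f0: "feasible3 d m n w \<Lambda> W0 S" and e0: "\<forall>i<n. T i (W0 i) = W i"
      using pre[OF fW] by blast
    show "S \<in> opt_shapes3 d m n w' D' \<Gamma> \<mu> Z' \<nu> \<Lambda>"
      unfolding opt_shapes3_def mem_Collect_eq
    proof (rule exI[of _ W0], intro conjI allI impI)
      show "feasible3 d m n w' \<Lambda> W0 S" using f0 feq by simp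
      fix W2 S2 assume f2: "feasible3 d m n w' \<Lambda> W2 S2"
      have f2': "feasible3 d m n w \<Lambda> W2 S2" using f2 feq by simp
      have "cost3 d n w' D' \<Gamma> \<mu> Z' \<nu> W0 S = cost3 d n w D \<Gamma> \<mu> Z \<nu> (\<lambda>i. T i (W0 i)) S"
        using cost f0 unfolding feasible3_def by simp
      also have "\<dots> = cost3 d n w D \<Gamma> \<mu> Z \<nu> W S" by (rule cost3_cong[OF e0])
      also have "\<dots> \<le> cost3 d n w D \<Gamma> \<mu> Z \<nu> (\<lambda>i. T i (W2 i)) S2" by (rule minW[OF fT[OF f2']])
      also have "\<dots> = cost3 d n w' D' \<Gamma> \<mu> Z' \<nu> W2 S2"
        using cost f2' unfolding feasible3_def by simp
      finally show "cost3 d n w' D' \<Gamma> \<mu> Z' \<nu> W0 S \<le> cost3 d n w' D' \<Gamma> \<mu> Z' \<nu> W2 S2" .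
    qed
  qed
qed

lemma psd_sq_carrier:
  assumes P: "psd Z" and ZZ: "Z * Z = E" and E: "E \<in> carrier_mat l l"
  shows "Z \<in> carrier_mat l l" "Z\<^sup>T = Z"
proof -
  have r: "dim_row Z = l" using arg_cong[OF ZZ, of dim_row] carrier_matD[OF E] by simp
  have "dim_col Z = dim_row Z" using P unfolding psd_def square_mat.simps by simp
  then show "Z \<in> carrier_mat l l" using r by (intro carrier_matI) simp_all
  show "Z\<^sup>T = Z" using P unfolding psd_def by simp
qed

theorem proposition10:
  fixes d m n :: nat
    and w :: "nat \<Rightarrow> warp"
    and D \<Gamma> Z Z' R :: "nat \<Rightarrow> real mat"
    and t :: "nat \<Rightarrow> real vec"
    and \<mu> :: "nat \<Rightarrow> real"
    and \<nu> :: real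
    and \<Lambda> :: "real mat"
  assumes d23: "d = 2 \<or> d = 3"
    and D_dim: "\<forall>i<n. D i \<in> carrier_mat d m"
    and Gamma: "\<forall>i<n. \<Gamma> i \<in> carrier_mat m m \<and> diagonal_mat (\<Gamma> i) \<and>
                   (\<forall>j<m. \<Gamma> i $$ (j,j) = 0 \<or> \<Gamma> i $$ (j,j) = 1)"
    and Lambda: "\<Lambda> \<in> carrier_mat d d" "diagonal_mat \<Lambda>"
    and nu: "\<nu> \<ge> 0"
    and affine: "\<forall>i<n. w i = Affine \<longrightarrow> \<mu> i = 0"
    and tps: "\<forall>i<n. \<forall>C lam. w i = TPS C lam \<longrightarrow>
                \<mu> i \<ge> 0 \<and> C \<in> carrier_mat d (dim_col C) \<and>
                invertible_mat (tps_K d C lam) \<and>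
                invertible_mat (tps_Ct d C * minv (tps_K d C lam) * (tps_Ct d C)\<^sup>T) \<and>
                psd (Z i) \<and> Z i * Z i = tps_Ebar d C lam \<and>
                psd (Z' i) \<and> Z' i * Z' i = tps_Ebar d (rigid (R i) (t i) C) lam"
    and inv: "\<forall>i<n. invertible_mat
                (featmat d (w i) (D i) * \<Gamma> i * \<Gamma> i * (featmat d (w i) (D i))\<^sup>T
                 + \<mu> i \<cdot>\<^sub>m ((Z i)\<^sup>T * Z i))"
    and rot: "\<forall>i<n. rotation_mat d (R i)"
    and trans: "\<forall>i<n. t i \<in> carrier_vec d"
  shows "opt_shapes3 d m n (\<lambda>i. warp_rigid (R i) (t i) (w i)) (\<lambda>i. rigid (R i) (t i) (D i))
            \<Gamma> \<mu> Z' \<nu> \<Lambda>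
         = opt_shapes3 d m n w D \<Gamma> \<mu> Z \<nu> \<Lambda>"
proof -
  define T where "T i W = (case w i of Affine \<Rightarrow> (affA d (R i) (t i))\<^sup>T * W | TPS C lam \<Rightarrow> W)"
    for i and W :: "real mat"
  have Rc: "R i \<in> carrier_mat d d" and RR: "(R i)\<^sup>T * R i = 1\<^sub>m d" and dR: "det (R i) = 1"
    if "i < n" for i using rot that unfolding rotation_mat_def by auto
  have tc: "t i \<in> carrier_vec d" if "i < n" for i using trans that by auto
  have Dc: "D i \<in> carrier_mat d m" if "i < n" for i using D_dim that by auto
  have fd: "\<forall>i<n. featdim d (warp_rigid (R i) (t i) (w i)) = featdim d (w i)"
  proof (intro allI impI)
    fix i assume "i < n"
    show "featdim d (warp_rigid (R i) (t i) (w i)) = featdim d (w i)"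
      by (cases "w i") (simp_all add: rigid_def)
  qed
  have T1: "T i W \<in> carrier_mat (featdim d (w i)) d"
    if i: "i < n" and W: "W \<in> carrier_mat (featdim d (w i)) d" for i W
  proof (cases "w i")
    case Affine
    have A: "(affA d (R i) (t i))\<^sup>T \<in> carrier_mat (d+1) (d+1)" using affA_carrier[OF Rc[OF i]] by simp
    show ?thesis using W A unfolding T_def Affine by simp
  next
    case (TPS C lam)
    show ?thesis using W unfolding T_def TPS by simp
  qed
  have T2: "\<exists>W\<in>carrier_mat (featdim d (w i)) d. T i W = W2"
    if i: "i < n" and W2: "W2 \<in> carrier_mat (featdim d (w i)) d" for i W2
  proof (cases "w i")
    case Affine
    define A where "A = affA d (R i) (t i)"
    have Ac: "A \<in> carrier_mat (d+1) (d+1)" unfolding A_def by (rule affA_carrier[OF Rc[OF i]])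
    have dA: "det A \<noteq> 0" unfolding A_def affA_det[OF Rc[OF i]] dR[OF i] by simp
    obtain Ai where Aic: "Ai \<in> carrier_mat (d+1) (d+1)" and AiA: "Ai * A = 1\<^sub>m (d+1)"
      by (rule unit_inverse[OF Ac dA])
    have ATAiT: "A\<^sup>T * Ai\<^sup>T = 1\<^sub>m (d+1)" unfolding transpose_mult[OF Aic Ac, symmetric] AiA by simp
    have W2': "W2 \<in> carrier_mat (d+1) d" using W2 Affine by simp
    have "A\<^sup>T * (Ai\<^sup>T * W2) = W2"
      by (rule cancel_l[OF ATAiT]) (use Ac Aic W2' in auto)
    moreover have "Ai\<^sup>T * W2 \<in> carrier_mat (featdim d (w i)) d" using Aic W2' Affine by simp
    ultimately show ?thesis unfolding T_def Affine A_def by auto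
  next
    case (TPS C lam)
    show ?thesis using W2 unfolding T_def TPS by auto
  qed
  have key: "(W\<^sup>T * featmat d (warp_rigid (R i) (t i) (w i)) (rigid (R i) (t i) (D i))
              = (T i W)\<^sup>T * featmat d (w i) (D i)) \<and>
             \<mu> i * fro2 (Z' i * W) = \<mu> i * fro2 (Z i * T i W)"
    if i: "i < n" and W: "W \<in> carrier_mat (featdim d (w i)) d" for i W
  proof (cases "w i")
    case Affine
    define A where "A = affA d (R i) (t i)"
    define F where "F = featmat d Affine (D i)"
    have Ac: "A \<in> carrier_mat (d+1) (d+1)" unfolding A_def by (rule affA_carrier[OF Rc[OF i]])
    have Fc: "F \<in> carrier_mat (d+1) m" unfolding F_def featmat_def using Dc[OF i] by auto
    have W': "W \<in> carrier_mat (d+1) d" using W Affine by simp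
    have F': "featmat d Affine (rigid (R i) (t i) (D i)) = A * F"
      unfolding A_def F_def by (rule featmat_affine_rigid[OF Rc[OF i] Dc[OF i] tc[OF i]])
    have "(A\<^sup>T * W)\<^sup>T = W\<^sup>T * A"
      using transpose_mult[of "A\<^sup>T" "d+1" "d+1" W d] Ac W' by simp
    moreover have "W\<^sup>T * (A * F) = (W\<^sup>T * A) * F"
      by (rule assoc_mult_mat[symmetric, of _ d "d+1" _ "d+1" _ m]) (use W' Ac Fc in auto)
    ultimately have e1: "W\<^sup>T * featmat d (warp_rigid (R i) (t i) (w i)) (rigid (R i) (t i) (D i))
              = (T i W)\<^sup>T * featmat d (w i) (D i)"
      unfolding T_def Affine warp_rigid.simps F' A_def[symmetric] F_def[symmetric] by simp
    have "\<mu> i = 0" using affine i Affine by auto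
    then show ?thesis using e1 by simp
  next
    case (TPS C lam)
    define l where "l = dim_col C"
    have H: "\<mu> i \<ge> 0 \<and> C \<in> carrier_mat d l \<and>
                invertible_mat (tps_K d C lam) \<and>
                invertible_mat (tps_Ct d C * minv (tps_K d C lam) * (tps_Ct d C)\<^sup>T) \<and>
                psd (Z i) \<and> Z i * Z i = tps_Ebar d C lam \<and>
                psd (Z' i) \<and> Z' i * Z' i = tps_Ebar d (rigid (R i) (t i) C) lam"
      using tps i TPS unfolding l_def by blast
    then have C: "C \<in> carrier_mat d l" and K: "invertible_mat (tps_K d C lam)"
      and M: "invertible_mat (tps_Ct d C * minv (tps_K d C lam) * (tps_Ct d C)\<^sup>T)"
      and PZ: "psd (Z i)" and ZZ: "Z i * Z i = tps_Ebar d C lam"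
      and PZ': "psd (Z' i)" and ZZ': "Z' i * Z' i = tps_Ebar d (rigid (R i) (t i) C) lam"
      by blast+
    note TI = tps_inv[OF Rc[OF i] RR[OF i] dR[OF i] C tc[OF i] K M]
    have Zc: "Z i \<in> carrier_mat l l" "(Z i)\<^sup>T = Z i" by (rule psd_sq_carrier[OF PZ ZZ TI(3)])+
    have ZZ'': "Z' i * Z' i = tps_Ebar d C lam" using ZZ' TI(1) by simp
    have Z'c: "Z' i \<in> carrier_mat l l" "(Z' i)\<^sup>T = Z' i" by (rule psd_sq_carrier[OF PZ' ZZ'' TI(3)])+
    have W': "W \<in> carrier_mat l d" using W TPS unfolding l_def by simp
    have e1: "featmat d (TPS (rigid (R i) (t i) C) lam) (rigid (R i) (t i) (D i)) = featmat d (TPS C lam) (D i)"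
      by (rule featmat_tps_rigid[OF Rc[OF i] RR[OF i] dR[OF i] C tc[OF i] K M Dc[OF i]])
    have e2: "fro2 (Z' i * W) = fro2 (Z i * W)"
      by (rule fro2_Z[OF Zc(1) Z'c(1) Zc(2) Z'c(2) _ W']) (use ZZ ZZ'' in simp)
    show ?thesis unfolding T_def TPS warp_rigid.simps e1 e2 by simp
  qed
  show ?thesis
  proof (rule opt_transfer[where T = T])
    show "\<forall>i<n. featdim d (warp_rigid (R i) (t i) (w i)) = featdim d (w i)" by (rule fd)
    show "\<And>i W. i < n \<Longrightarrow> W \<in> carrier_mat (featdim d (w i)) d \<Longrightarrow> T i W \<in> carrier_mat (featdim d (w i)) d"
      by (rule T1)
    show "\<And>i W2. i < n \<Longrightarrow> W2 \<in> carrier_mat (featdim d (w i)) d \<Longrightarrow> \<exists>W\<in>carrier_mat (featdim d (w i)) d. T i W = W2"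
      by (rule T2)
    fix W :: "nat \<Rightarrow> real mat" and S :: "real mat"
    assume Wc: "\<forall>i<n. W i \<in> carrier_mat (featdim d (w i)) d"
    have s1: "(\<Sum>i<n. fro2 ((W i)\<^sup>T * featmat d (warp_rigid (R i) (t i) (w i)) (rigid (R i) (t i) (D i)) * \<Gamma> i - S * \<Gamma> i))
        = (\<Sum>i<n. fro2 ((T i (W i))\<^sup>T * featmat d (w i) (D i) * \<Gamma> i - S * \<Gamma> i))"
      using key Wc by (intro sum.cong[OF refl]) simp
    have s2: "(\<Sum>i<n. \<mu> i * fro2 (Z' i * W i)) = (\<Sum>i<n. \<mu> i * fro2 (Z i * T i (W i)))"
      using key Wc by (intro sum.cong[OF refl]) simp
    show "cost3 d n (\<lambda>i. warp_rigid (R i) (t i) (w i)) (\<lambda>i. rigid (R i) (t i) (D i)) \<Gamma> \<mu> Z' \<nu> W S =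
          cost3 d n w D \<Gamma> \<mu> Z \<nu> (\<lambda>i. T i (W i)) S"
      unfolding cost3_def s1 s2 ..
  qed
qed

end
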